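(* Let $G$ be a topological group and let $X$ be a $G$-Banach space, i.e. a (real) Banach space equipped with a continuous action of $G$ by linear isometries. Then there exists an equivalent norm $\|\cdot\|'$ on $X$ that is strictly convex and $G$-invariant (i.e. $\|g\cdot x\|'=\|x\|'$ for all $g\in G$, $x\in X$) if and only if there exist a strictly convex $G$-Banach space $Y$ and a bounded injective $G$-equivariant linear operator from $X$ to $Y$.
   Context: A linear operator $\phi:X\to Y$ between $G$-Banach spaces is $G$-equivariant if $\phi(g\cdot x)=g\cdot\phi(x)$ for all $g\in G$, $x\in X$. A norm $\|\cdot\|$ is strictly convex if for every $x\neq y$ with $\|x\|=\|y\|$ one has $\|\frac{x+y}{2}\|<\|x\|$. *)

theory Defs
  imports "HOL-Analysis.Analysis" "HOL-Algebra.Group"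
begin

definition topological_group :: "('g, 'm) monoid_scheme \<Rightarrow> 'g topology \<Rightarrow> bool" where
  "topological_group G T \<longleftrightarrow>
     group G \<and> topspace T = carrier G \<and>
     continuous_map (prod_topology T T) T (\<lambda>p. fst p \<otimes>\<^bsub>G\<^esub> snd p) \<and>
     continuous_map T T (\<lambda>g. inv\<^bsub>G\<^esub> g)"

definition is_norm :: "('a::real_vector \<Rightarrow> real) \<Rightarrow> bool" where
  "is_norm N \<longleftrightarrow>
     (\<forall>x. N x \<ge> 0) \<and> (\<forall>x. N x = 0 \<longleftrightarrow> x = 0) \<and>
     (\<forall>a x. N (a *\<^sub>R x) = \<bar>a\<bar> * N x) \<and>
     (\<forall>x y. N (x + y) \<le> N x + N y)"

definition banach_norm :: "('a::real_vector \<Rightarrow> real) \<Rightarrow> bool" where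
  "banach_norm N \<longleftrightarrow> is_norm N \<and>
     (\<forall>s::nat \<Rightarrow> 'a. (\<forall>e>0. \<exists>M. \<forall>m\<ge>M. \<forall>n\<ge>M. N (s m - s n) < e) \<longrightarrow>
        (\<exists>l. (\<lambda>n. N (s n - l)) \<longlonglongrightarrow> 0))"

definition strictly_convex_norm :: "('a::real_vector \<Rightarrow> real) \<Rightarrow> bool" where
  "strictly_convex_norm N \<longleftrightarrow>
     (\<forall>x y. x \<noteq> y \<and> N x = N y \<longrightarrow> N ((1/2) *\<^sub>R (x + y)) < N x)"

definition equivalent_norms :: "('a::real_vector \<Rightarrow> real) \<Rightarrow> ('a \<Rightarrow> real) \<Rightarrow> bool" where
  "equivalent_norms N1 N2 \<longleftrightarrow>
     (\<exists>c C. 0 < c \<and> 0 < C \<and> (\<forall>x. c * N1 x \<le> N2 x \<and> N2 x \<le> C * N1 x))"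

definition G_banach_space ::
  "('g, 'm) monoid_scheme \<Rightarrow> 'g topology \<Rightarrow> ('g \<Rightarrow> 'a \<Rightarrow> 'a) \<Rightarrow> ('a::real_vector \<Rightarrow> real) \<Rightarrow> bool" where
  "G_banach_space G T act N \<longleftrightarrow>
     banach_norm N \<and>
     (\<forall>x. act \<one>\<^bsub>G\<^esub> x = x) \<and>
     (\<forall>g\<in>carrier G. \<forall>h\<in>carrier G. \<forall>x. act (g \<otimes>\<^bsub>G\<^esub> h) x = act g (act h x)) \<and>
     (\<forall>g\<in>carrier G. linear (act g)) \<and>
     (\<forall>g\<in>carrier G. \<forall>x. N (act g x) = N x) \<and>
     (\<forall>g0\<in>carrier G. \<forall>x0. \<forall>e>0. \<exists>U d. openin T U \<and> g0 \<in> U \<and> d > 0 \<and>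
        (\<forall>g\<in>U. \<forall>x. N (x - x0) < d \<longrightarrow> N (act g x - act g0 x0) < e))"

definition bounded_inj_equivariant ::
  "('g, 'm) monoid_scheme \<Rightarrow> ('g \<Rightarrow> 'a \<Rightarrow> 'a) \<Rightarrow> ('a::real_vector \<Rightarrow> real) \<Rightarrow>
   ('g \<Rightarrow> 'b \<Rightarrow> 'b) \<Rightarrow> ('b::real_vector \<Rightarrow> real) \<Rightarrow> ('a \<Rightarrow> 'b) \<Rightarrow> bool" where
  "bounded_inj_equivariant G actX NX actY NY phi \<longleftrightarrow>
     linear phi \<and> inj phi \<and> (\<exists>C. \<forall>x. NY (phi x) \<le> C * NX x) \<and>
     (\<forall>g\<in>carrier G. \<forall>x. phi (actX g x) = actY g (phi x))"

end

theory Submission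
  imports Defs
begin

lemma isn_facts:
  assumes "is_norm N"
  shows "N x \<ge> 0" "N x = 0 \<longleftrightarrow> x = 0" "N (a *\<^sub>R x) = \<bar>a\<bar> * N x" "N (x + y) \<le> N x + N y"
  using assms unfolding is_norm_def by auto

lemma isn_minus: assumes "is_norm N" shows "N (x - y) = N (y - x)"
proof -
  have "x - y = (-1) *\<^sub>R (y - x)" by (simp add: algebra_simps)
  then show ?thesis using isn_facts(3)[OF assms, of "-1" "y - x"] by simp
qed

lemma aux_lt: "(k::real) * M < k * 1 \<Longrightarrow> c = 1 - k \<Longrightarrow> k * M + c < 1"
  by simp

lemma sc_line:
  assumes n: "is_norm N" and sc: "strictly_convex_norm N"
    and p: "N p = 1" and q: "N q = 1" and pq: "p \<noteq> q" and l: "0 < l" "l < 1"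
  shows "N (l *\<^sub>R p + (1 - l) *\<^sub>R q) < 1"
proof -
  have mid: "N ((1/2) *\<^sub>R (p + q)) < 1" using sc pq p q unfolding strictly_convex_norm_def by metis
  show ?thesis
  proof (cases "l \<le> 1/2")
    case True
    have eq: "l *\<^sub>R p + (1 - l) *\<^sub>R q = (2*l) *\<^sub>R ((1/2) *\<^sub>R (p + q)) + (1 - 2*l) *\<^sub>R q"
    proof -
      have "(2*l) *\<^sub>R ((1/2) *\<^sub>R (p + q)) = l *\<^sub>R p + l *\<^sub>R q" by (simp add: scaleR_add_right)
      moreover have "(1 - 2*l) *\<^sub>R q = (1 - l) *\<^sub>R q - l *\<^sub>R q" by (metis diff_diff_eq mult_2 scaleR_diff_left)
      ultimately show ?thesis by simp
    qed
    have "N (l *\<^sub>R p + (1 - l) *\<^sub>R q) \<le> N ((2*l) *\<^sub>R ((1/2) *\<^sub>R (p + q))) + N ((1 - 2*l) *\<^sub>R q)"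
      unfolding eq by (rule isn_facts(4)[OF n])
    also have "\<dots> = 2*l * N ((1/2) *\<^sub>R (p + q)) + (1 - 2*l)"
      using isn_facts(3)[OF n] q l True by simp
    also have "\<dots> < 1"
    proof -
      have "2*l * N ((1/2) *\<^sub>R (p + q)) < 2*l * 1" using mid l by (intro mult_strict_left_mono) auto
      then show ?thesis by (rule aux_lt) simp
    qed
    finally show ?thesis .
  next
    case False
    have eq: "l *\<^sub>R p + (1 - l) *\<^sub>R q = (2*(1-l)) *\<^sub>R ((1/2) *\<^sub>R (p + q)) + (2*l - 1) *\<^sub>R p"
    proof -
      have c: "(2*(1-l)) * (1/2) = 1 - l" by simp
      have "(2*(1-l)) *\<^sub>R ((1/2) *\<^sub>R (p + q)) = (1-l) *\<^sub>R p + (1-l) *\<^sub>R q" by (simp only: scaleR_scaleR c scaleR_add_right)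
      moreover have "(2*l - 1) *\<^sub>R p = l *\<^sub>R p - (1-l) *\<^sub>R p" by (metis diff_diff_eq2 mult_2 scaleR_diff_left diff_add_eq)
      ultimately show ?thesis by simp
    qed
    have "N (l *\<^sub>R p + (1 - l) *\<^sub>R q) \<le> N ((2*(1-l)) *\<^sub>R ((1/2) *\<^sub>R (p + q))) + N ((2*l - 1) *\<^sub>R p)"
      unfolding eq by (rule isn_facts(4)[OF n])
    also have "\<dots> = 2*(1-l) * N ((1/2) *\<^sub>R (p + q)) + (2*l - 1)"
      using isn_facts(3)[OF n] p l False by simp
    also have "\<dots> < 1"
    proof -
      have "2*(1-l) * N ((1/2) *\<^sub>R (p + q)) < 2*(1-l) * 1" using mid l by (intro mult_strict_left_mono) auto
      then show ?thesis by (rule aux_lt) simp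
    qed
    finally show ?thesis .
  qed
qed

lemma sc_eq:
  assumes n: "is_norm N" and sc: "strictly_convex_norm N"
    and u: "u \<noteq> 0" and v: "v \<noteq> 0" and e: "N (u + v) = N u + N v"
  shows "(1 / N u) *\<^sub>R u = (1 / N v) *\<^sub>R v"
proof (rule ccontr)
  assume ne: "(1 / N u) *\<^sub>R u \<noteq> (1 / N v) *\<^sub>R v"
  define a where "a = N u"
  define b where "b = N v"
  have a: "a > 0" using isn_facts(1,2)[OF n, of u] u a_def by force
  have b: "b > 0" using isn_facts(1,2)[OF n, of v] v b_def by force
  define p where "p = (1/a) *\<^sub>R u"
  define q where "q = (1/b) *\<^sub>R v"
  have p1: "N p = 1" using isn_facts(3)[OF n, of "1/a" u] a unfolding p_def a_def by simp
  have q1: "N q = 1" using isn_facts(3)[OF n, of "1/b" v] b unfolding q_def b_def by simp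
  define l where "l = a / (a + b)"
  have l: "0 < l" "l < 1" using a b unfolding l_def by (auto simp: field_simps)
  have "u + v = (a + b) *\<^sub>R (l *\<^sub>R p + (1 - l) *\<^sub>R q)"
  proof -
    have c1: "(a+b)*l = a" using a b unfolding l_def by (simp add: field_simps)
    have c2: "(a+b)*(1-l) = b" using a b unfolding l_def by (simp add: field_simps)
    have "(a + b) *\<^sub>R (l *\<^sub>R p + (1 - l) *\<^sub>R q) = ((a+b)*l) *\<^sub>R p + ((a+b)*(1-l)) *\<^sub>R q"
      by (simp only: scaleR_add_right scaleR_scaleR)
    also have "\<dots> = a *\<^sub>R p + b *\<^sub>R q" by (simp only: c1 c2)
    also have "\<dots> = u + v" using a b unfolding p_def q_def by simp
    finally show ?thesis by simp
  qed
  then have "N (u + v) = (a + b) * N (l *\<^sub>R p + (1 - l) *\<^sub>R q)"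
    using isn_facts(3)[OF n] a b by simp
  also have "\<dots> < (a + b) * 1"
    using sc_line[OF n sc p1 q1 _ l] ne a b unfolding p_def q_def a_def b_def
    by (intro mult_strict_left_mono) auto
  finally show False using e a_def b_def by simp
qed

lemma forward_dir:
  fixes act :: "'g \<Rightarrow> 'a::banach \<Rightarrow> 'a"
  assumes gb: "G_banach_space G T act norm"
    and n: "is_norm N'" and eq: "equivalent_norms norm N'" and sc: "strictly_convex_norm N'"
    and inv: "\<forall>g\<in>carrier G. \<forall>x. N' (act g x) = N' x"
  shows "\<exists>(NY :: 'a \<Rightarrow> real) actY phi. G_banach_space G T actY NY \<and> strictly_convex_norm NY \<and>
                 bounded_inj_equivariant G act norm actY NY phi"
proof -
  obtain c C where cC: "0 < c" "0 < C" and b: "\<And>x. c * norm x \<le> N' x" "\<And>x. N' x \<le> C * norm x"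
    using eq unfolding equivalent_norms_def by blast
  have ban: "banach_norm N'"
    unfolding banach_norm_def
  proof (intro conjI allI impI)
    show "is_norm N'" by (rule n)
    fix s :: "nat \<Rightarrow> 'a"
    assume cs: "\<forall>e>0. \<exists>M. \<forall>m\<ge>M. \<forall>n\<ge>M. N' (s m - s n) < e"
    have "Cauchy s"
      unfolding Cauchy_def dist_norm
    proof (intro allI impI)
      fix e :: real assume e: "e > 0"
      then obtain M where M: "\<forall>m\<ge>M. \<forall>n\<ge>M. N' (s m - s n) < c * e" using cs cC by (meson mult_pos_pos)
      have "\<forall>m\<ge>M. \<forall>n\<ge>M. norm (s m - s n) < e"
      proof (intro allI impI)
        fix m n assume "m \<ge> M" "n \<ge> M"
        then have "c * norm (s m - s n) < c * e" using M b(1)[of "s m - s n"] by force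
        then show "norm (s m - s n) < e" using cC by simp
      qed
      then show "\<exists>M. \<forall>m\<ge>M. \<forall>n\<ge>M. norm (s m - s n) < e" by blast
    qed
    then obtain l where l: "s \<longlonglongrightarrow> l" using convergent_def Cauchy_convergent_iff by blast
    have "(\<lambda>n. norm (s n - l)) \<longlonglongrightarrow> 0"
      using tendsto_norm_zero[OF LIM_zero[OF l]] .
    then have h: "(\<lambda>n. C * norm (s n - l)) \<longlonglongrightarrow> 0"
      using tendsto_mult_right_zero by blast
    have "(\<lambda>n. N' (s n - l)) \<longlonglongrightarrow> 0"
      by (rule tendsto_sandwich[OF _ _ tendsto_const h])
         (use isn_facts(1)[OF n] b(2) in auto)
    then show "\<exists>l. (\<lambda>n. N' (s n - l)) \<longlonglongrightarrow> 0" by blast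
  qed
  have cont: "\<forall>g0\<in>carrier G. \<forall>x0. \<forall>e>0. \<exists>U d. openin T U \<and> g0 \<in> U \<and> d > 0 \<and>
        (\<forall>g\<in>U. \<forall>x. N' (x - x0) < d \<longrightarrow> N' (act g x - act g0 x0) < e)"
  proof (intro ballI allI impI)
    fix g0 x0 and e :: real assume g0: "g0 \<in> carrier G" and e: "e > 0"
    then have "e / C > 0" using cC by simp
    then obtain U d where U: "openin T U" "g0 \<in> U" "d > 0"
      and Ud: "\<forall>g\<in>U. \<forall>x. norm (x - x0) < d \<longrightarrow> norm (act g x - act g0 x0) < e / C"
      using gb g0 unfolding G_banach_space_def by meson
    have "\<forall>g\<in>U. \<forall>x. N' (x - x0) < c * d \<longrightarrow> N' (act g x - act g0 x0) < e"
    proof (intro ballI allI impI)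
      fix g x assume g: "g \<in> U" and x: "N' (x - x0) < c * d"
      then have "c * norm (x - x0) < c * d" using b(1)[of "x - x0"] by linarith
      then have "norm (x - x0) < d" using cC by simp
      then have "norm (act g x - act g0 x0) < e / C" using Ud g by blast
      then have "C * norm (act g x - act g0 x0) < e" using cC by (simp add: field_simps)
      then show "N' (act g x - act g0 x0) < e" using b(2)[of "act g x - act g0 x0"] by linarith
    qed
    then show "\<exists>U d. openin T U \<and> g0 \<in> U \<and> d > 0 \<and>
        (\<forall>g\<in>U. \<forall>x. N' (x - x0) < d \<longrightarrow> N' (act g x - act g0 x0) < e)"
      using U cC by (meson mult_pos_pos)
  qed
  have "G_banach_space G T act N'"
    using gb ban inv cont unfolding G_banach_space_def by blast
  moreover have "bounded_inj_equivariant G act norm act N' id"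
    unfolding bounded_inj_equivariant_def using b(2) by (auto simp: linear_id)
  ultimately show ?thesis using sc by blast
qed

lemma backward_dir:
  fixes act :: "'g \<Rightarrow> 'a::banach \<Rightarrow> 'a" and NY :: "'b::real_vector \<Rightarrow> real"
  assumes gb: "G_banach_space G T act norm"
    and gy: "G_banach_space G T actY NY" and scy: "strictly_convex_norm NY"
    and bij: "bounded_inj_equivariant G act norm actY NY phi"
  shows "\<exists>N'. is_norm N' \<and> equivalent_norms norm N' \<and> strictly_convex_norm N' \<and>
              (\<forall>g\<in>carrier G. \<forall>x. N' (act g x) = N' x)"
proof -
  have ny: "is_norm NY" using gy unfolding G_banach_space_def banach_norm_def by blast
  have lin: "linear phi" and inj: "inj phi" using bij unfolding bounded_inj_equivariant_def by auto
  obtain C0 where C0: "\<And>x. NY (phi x) \<le> C0 * norm x" using bij unfolding bounded_inj_equivariant_def by blast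
  have equi: "\<And>g x. g \<in> carrier G \<Longrightarrow> phi (act g x) = actY g (phi x)"
    using bij unfolding bounded_inj_equivariant_def by blast
  have inj0: "\<And>x. phi x = 0 \<Longrightarrow> x = 0"
    using inj lin by (metis injD linear_0)
  define N' where "N' x = norm x + NY (phi x)" for x
  have nN: "is_norm N'"
    unfolding is_norm_def
  proof (intro conjI allI)
    fix x
    show "N' x \<ge> 0" unfolding N'_def using isn_facts(1)[OF ny] by (simp add: add_nonneg_nonneg)
    show "N' x = 0 \<longleftrightarrow> x = 0"
      unfolding N'_def using isn_facts(1,2)[OF ny, of "phi x"] inj0 linear_0[OF lin]
      by (smt (verit) norm_ge_zero norm_zero isn_facts(2)[OF ny])
    fix a :: real
    show "N' (a *\<^sub>R x) = \<bar>a\<bar> * N' x"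
      unfolding N'_def using isn_facts(3)[OF ny] linear_scale[OF lin]
      by (simp add: distrib_left)
  next
    fix x y
    show "N' (x + y) \<le> N' x + N' y"
      unfolding N'_def using isn_facts(4)[OF ny, of "phi x" "phi y"] linear_add[OF lin, of x y]
        norm_triangle_ineq[of x y] by simp
  qed
  have eqv: "equivalent_norms norm N'"
    unfolding equivalent_norms_def
  proof (intro exI conjI allI)
    fix x
    show "1 * norm x \<le> N' x" unfolding N'_def using isn_facts(1)[OF ny] by simp
    have "C0 * norm x \<le> max C0 0 * norm x" by (simp add: mult_right_mono)
    then show "N' x \<le> (1 + max C0 0) * norm x" unfolding N'_def using C0[of x]
      by (simp add: distrib_right)
  qed auto
  have scN: "strictly_convex_norm N'"
    unfolding strictly_convex_norm_def
  proof (intro allI impI)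
    fix x y assume xy: "x \<noteq> y \<and> N' x = N' y"
    have half: "N' ((1/2) *\<^sub>R (x + y)) = (1/2) * N' (x + y)" using isn_facts(3)[OF nN] by simp
    show "N' ((1/2) *\<^sub>R (x + y)) < N' x"
    proof (rule ccontr)
      assume "\<not> ?thesis"
      then have ge: "N' (x + y) \<ge> N' x + N' y" using half xy by simp
      define u where "u = phi x"
      define v where "v = phi y"
      have puv: "phi (x + y) = u + v" unfolding u_def v_def using linear_add[OF lin] by simp
      have "NY (u + v) \<ge> NY u + NY v"
        using ge norm_triangle_ineq[of x y] unfolding N'_def puv u_def v_def by linarith
      then have e: "NY (u + v) = NY u + NY v" using isn_facts(4)[OF ny, of u v] by linarith
      show False
      proof (cases "u = 0 \<or> v = 0")
        case True
        then have "x = 0 \<or> y = 0" using inj0 unfolding u_def v_def by auto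
        then have "N' x = 0 \<or> N' y = 0" using isn_facts(2)[OF nN] by blast
        then have "N' x = 0 \<and> N' y = 0" using xy by simp
        then have "x = 0 \<and> y = 0" using isn_facts(2)[OF nN] by blast
        then show False using xy by simp
      next
        case False
        then have u: "u \<noteq> 0" and v: "v \<noteq> 0" by auto
        define a where "a = NY u"
        define b where "b = NY v"
        have a: "a > 0" using isn_facts(1,2)[OF ny, of u] u a_def by force
        have b: "b > 0" using isn_facts(1,2)[OF ny, of v] v b_def by force
        have s: "(1/a) *\<^sub>R u = (1/b) *\<^sub>R v" using sc_eq[OF ny scy u v e] a_def b_def by simp
        have "v = (b/a) *\<^sub>R u"
        proof -
          have "b *\<^sub>R ((1/b) *\<^sub>R v) = v" using b by simp
          then show ?thesis using s by (metis scaleR_scaleR times_divide_eq_right mult_1_right)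
        qed
        then have "phi y = phi ((b/a) *\<^sub>R x)" using linear_scale[OF lin] u_def v_def by simp
        then have yx: "y = (b/a) *\<^sub>R x" using inj by (meson injD)
        have x0: "x \<noteq> 0" using u u_def linear_0[OF lin] by auto
        then have nx: "N' x > 0" using isn_facts(1,2)[OF nN, of x] by force
        have "N' y = (b/a) * N' x" using yx isn_facts(3)[OF nN] a b by simp
        then have "(b/a) * N' x = 1 * N' x" using xy by simp
        then have "b/a = 1" using nx by (metis mult_cancel_right less_irrefl)
        then show False using yx xy by simp
      qed
    qed
  qed
  have invN: "\<forall>g\<in>carrier G. \<forall>x. N' (act g x) = N' x"
  proof (intro ballI allI)
    fix g x assume g: "g \<in> carrier G"
    have "norm (act g x) = norm x" using gb g unfolding G_banach_space_def by blast
    moreover have "NY (actY g (phi x)) = NY (phi x)" using gy g unfolding G_banach_space_def by blast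
    ultimately show "N' (act g x) = N' x" unfolding N'_def using equi[OF g] by simp
  qed
  show ?thesis using nN eqv scN invN by blast
qed

theorem proposition3p1:
  fixes G :: "('g, 'm) monoid_scheme" and T :: "'g topology"
    and act :: "'g \<Rightarrow> 'a::banach \<Rightarrow> 'a"
  assumes "topological_group G T"
    and "G_banach_space G T act norm"
  shows "((\<exists>N'. is_norm N' \<and> equivalent_norms norm N' \<and> strictly_convex_norm N' \<and>
              (\<forall>g\<in>carrier G. \<forall>x. N' (act g x) = N' x))
          \<longrightarrow> (\<exists>(NY :: 'a \<Rightarrow> real) actY phi. G_banach_space G T actY NY \<and> strictly_convex_norm NY \<and>
                 bounded_inj_equivariant G act norm actY NY phi))
       \<and> (\<forall>(NY :: 'b::real_vector \<Rightarrow> real) actY (phi :: 'a \<Rightarrow> 'b).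
            G_banach_space G T actY NY \<and> strictly_convex_norm NY \<and>
            bounded_inj_equivariant G act norm actY NY phi
          \<longrightarrow> (\<exists>N'. is_norm N' \<and> equivalent_norms norm N' \<and> strictly_convex_norm N' \<and>
              (\<forall>g\<in>carrier G. \<forall>x. N' (act g x) = N' x)))"
  using forward_dir[OF assms(2)] backward_dir[OF assms(2)] by blast

end
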